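(* For every $h\in G$ and $n\in\mathbb Z$, the ideal $\{h^n\}^{\#\#}\lhd\kappa G^\#$ is contained in the ideal of $\kappa G^\#$ generated by $P_n(\bar h)$.
   Context: Let $\kappa$ be a field of characteristic $0$ and $G$ a group. Let $*:\kappa G\to\kappa G$ be the $\kappa$-linear map with $g^*=g^{-1}$, $(\kappa G)^*$ its fixed points, and $A_G$ the quotient of $\kappa G$ by the two-sided ideal generated by all $ab-ba$, $a\in\kappa G$, $b\in(\kappa G)^*$; $*$ descends to $A_G$, and $\kappa G^\#=\{x\in A_G:x^*=x\}$. Group elements are identified with their images in $A_G$, and $\bar x=\tfrac12(x+x^* )$. For $L\subset G$, $L^{\#\#}$ is the ideal of $\kappa G^\#$ generated by $\{\overline{xl}-\overline{xl^{-1}}:x\in A_G,l\in L\}$. The polynomials $P_n\in\kappa[X]$ are defined by $P_0=0$, $P_1=1$, $2XP_n=P_{n-1}+P_{n+1}$ for all $n\in\mathbb Z$. *)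

theory Defs
  imports "HOL-Library.Poly_Mapping" "HOL-Computational_Algebra.Polynomial"
begin

text \<open>The group G is a type of class group_add; its group law is written additively
  (so the group product g h is g + h, the inverse g^-1 is - g, the unit is 0).\<close>

type_synonym ('g, 'k) grpalg = "'g \<Rightarrow>\<^sub>0 'k"

definition gelem :: "'g::group_add \<Rightarrow> ('g, 'k::field) grpalg" where
  "gelem g = Poly_Mapping.single g 1"

definition scal :: "'k::field \<Rightarrow> ('g::group_add, 'k) grpalg" where
  "scal c = Poly_Mapping.single 0 c"

definition gpow :: "'g::group_add \<Rightarrow> int \<Rightarrow> 'g" where
  "gpow h n = (if 0 \<le> n then ((+) h ^^ nat n) 0 else - (((+) h ^^ nat (- n)) 0))"

definition star :: "('g::group_add, 'k::field) grpalg \<Rightarrow> ('g, 'k) grpalg" where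
  "star x = Abs_poly_mapping (\<lambda>g. Poly_Mapping.lookup x (- g))"

definition twosided_ideal :: "('g::group_add, 'k::field) grpalg set \<Rightarrow> bool" where
  "twosided_ideal J \<longleftrightarrow> 0 \<in> J \<and> (\<forall>a\<in>J. \<forall>b\<in>J. a + b \<in> J)
     \<and> (\<forall>r. \<forall>a\<in>J. r * a \<in> J \<and> a * r \<in> J)"

text \<open>The kernel of the quotient map kappa G \<rightarrow> A_G: the two-sided ideal generated by
  all commutators ab - ba with b* = b.\<close>
definition Icomm :: "('g::group_add, 'k::field) grpalg set" where
  "Icomm = \<Inter>{J. twosided_ideal J \<and> {a * b - b * a | a b. star b = b} \<subseteq> J}"

text \<open>Preimage in kappa G of kappa G^# = {x \<in> A_G. x* = x}.\<close>
definition Sharp :: "('g::group_add, 'k::field) grpalg set" where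
  "Sharp = {x. star x - x \<in> Icomm}"

definition bar :: "('g::group_add, 'k::field) grpalg \<Rightarrow> ('g, 'k) grpalg" where
  "bar x = scal (1/2) * (x + star x)"

text \<open>Preimage in kappa G of the ideal of the ring kappa G^# generated by (the image of) T:
  the smallest set J with Icomm \<subseteq> J \<subseteq> Sharp that is an ideal of Sharp containing T.
  (Ideals of kappa G^# correspond to such J; containment of ideals corresponds to containment
  of preimages.)\<close>
definition sharp_ideal :: "('g::group_add, 'k::field) grpalg set \<Rightarrow> ('g, 'k) grpalg set" where
  "sharp_ideal T = \<Inter>{J. Icomm \<subseteq> J \<and> J \<subseteq> Sharp \<and> T \<subseteq> J \<and> 0 \<in> J
      \<and> (\<forall>a\<in>J. \<forall>b\<in>J. a + b \<in> J) \<and> (\<forall>r\<in>Sharp. \<forall>a\<in>J. r * a \<in> J \<and> a * r \<in> J)}"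

definition dsharp :: "'g::group_add set \<Rightarrow> ('g, 'k::field) grpalg set" where
  "dsharp L = sharp_ideal {bar (x * gelem l) - bar (x * gelem (- l)) | x l. l \<in> L}"

fun Pnat :: "nat \<Rightarrow> 'k::field poly" where
  "Pnat 0 = 0"
| "Pnat (Suc 0) = 1"
| "Pnat (Suc (Suc n)) = smult 2 [:0, 1:] * Pnat (Suc n) - Pnat n"

definition Pint :: "int \<Rightarrow> 'k::field poly" where
  "Pint n = (if 0 \<le> n then Pnat (nat n) else - Pnat (nat (- n)))"

definition peval :: "'k::field poly \<Rightarrow> ('g::group_add, 'k) grpalg \<Rightarrow> ('g, 'k) grpalg" where
  "peval p x = (\<Sum>i\<le>degree p. scal (coeff p i) * x ^ i)"

lemma Pint_rec: "smult 2 [:0, 1:] * Pint n = Pint (n - 1) + Pint (n + 1)"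
proof -
  have rec: "\<And>m. Pnat (Suc (Suc m)) = smult 2 [:0, 1:] * Pnat (Suc m) - (Pnat m :: 'a poly)"
    by simp
  consider "n \<ge> 1" | "n = 0" | "n \<le> -1" by linarith
  then show ?thesis
  proof cases
    case 1
    define m where "m = nat (n - 1)"
    have m: "n = int m + 1" using 1 by (simp add: m_def)
    have a: "nat n = Suc m" "nat (n - 1) = m" "nat (n + 1) = Suc (Suc m)" using m by auto
    show ?thesis using 1 rec[of m] by (simp add: Pint_def a)
  next
    case 2
    then show ?thesis by (simp add: Pint_def)
  next
    case 3
    define m where "m = nat (- n - 1)"
    have m: "n = - int m - 1" using 3 by (simp add: m_def)
    have a: "nat (- n) = Suc m" "nat (- (n - 1)) = Suc (Suc m)" "nat (- (n + 1)) = m" using m by auto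
    have b: "\<not> 0 \<le> n" "\<not> 0 \<le> n - 1" using 3 by auto
    show ?thesis
    proof (cases "m = 0")
      case True
      then have "n = -1" using m by simp
      then show ?thesis using rec[of 0] by (simp add: Pint_def numeral_2_eq_2)
    next
      case False
      then have "\<not> 0 \<le> n + 1" using m by simp
      then have c: "Pint n = - Pnat (Suc m)" "Pint (n - 1) = - Pnat (Suc (Suc m))"
        "Pint (n + 1) = - Pnat m" using b a unfolding Pint_def by auto
      show ?thesis unfolding c rec[of m] by (simp add: algebra_simps)
    qed
  qed
qed

end

theory Submission
  imports Defs
begin

lemma pm_induct[case_names zero add]:
  fixes f :: "'a \<Rightarrow>\<^sub>0 'b::monoid_add"
  assumes "P 0" and "\<And>f g c. P f \<Longrightarrow> P (f + Poly_Mapping.single g c)"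
  shows "P f"
proof (induct f rule: Poly_Mapping.update_induct)
  case const then show ?case using assms(1) .
next
  case (update f a b)
  have "Poly_Mapping.update a b f = f + Poly_Mapping.single a b"
    using update(1)
    by (intro poly_mapping_eqI) (auto simp: lookup_update lookup_add lookup_single in_keys_iff when_def)
  then show ?case using assms(2) update by simp
qed

lemma lookup_star: "Poly_Mapping.lookup (star x) g = Poly_Mapping.lookup x (- g)"
proof -
  have "{g. Poly_Mapping.lookup x (- g) \<noteq> 0} = uminus ` {g. Poly_Mapping.lookup x g \<noteq> 0}"
    by (auto intro: image_eqI[where x="- _"])
  then have "finite {g. Poly_Mapping.lookup x (- g) \<noteq> 0}" by simp
  then show ?thesis unfolding star_def by simp
qed

lemma star_add: "star (x + y) = star x + star y"
  by (intro poly_mapping_eqI) (simp add: lookup_star lookup_add)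
lemma star_zero[simp]: "star 0 = 0"
  by (intro poly_mapping_eqI) (simp add: lookup_star)
lemma star_minus: "star (- x) = - star x"
  by (intro poly_mapping_eqI) (simp add: lookup_star lookup_minus)
lemma star_diff: "star (x - y) = star x - star y"
  by (intro poly_mapping_eqI) (simp add: lookup_star lookup_minus)
lemma star_star[simp]: "star (star x) = x"
  by (intro poly_mapping_eqI) (simp add: lookup_star)
lemma star_single: "star (Poly_Mapping.single g c) = Poly_Mapping.single (- g) c"
  by (intro poly_mapping_eqI) (auto simp add: lookup_star lookup_single when_def)

lemma star_mult: "star (x * y) = star y * (star x :: ('g::group_add,'k::field) grpalg)"
proof (induct x arbitrary: y rule: pm_induct)
  case zero then show ?case by simp
next
  case (add f g c)
  have "star (Poly_Mapping.single g c * y) = star y * star (Poly_Mapping.single g c)"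
  proof (induct y rule: pm_induct)
    case zero then show ?case by simp
  next
    case (add f2 g2 c2)
    then show ?case
      by (simp add: distrib_left distrib_right star_add mult_single star_single minus_add mult.commute)
  qed
  then show ?case using add by (simp add: distrib_right distrib_left star_add)
qed


lemma scal_mult: "scal a * scal b = (scal (a*b) :: ('g::group_add,'k::field) grpalg)"
  by (simp add: scal_def mult_single)
lemma scal_add: "scal (a + b) = (scal a + scal b :: ('g::group_add,'k::field) grpalg)"
  by (simp add: scal_def single_add)
lemma scal_minus: "scal (- a) = (- scal a :: ('g::group_add,'k::field) grpalg)"
  by (simp add: scal_def single_uminus)
lemma scal_0[simp]: "scal 0 = 0" by (simp add: scal_def)
lemma scal_1[simp]: "scal 1 = 1" by (simp add: scal_def)
lemma scal_comm: "scal c * x = x * (scal c :: ('g::group_add,'k::field) grpalg)"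
proof (induct x rule: pm_induct)
  case zero then show ?case by simp
next
  case (add f g d) then show ?case
    by (simp add: scal_def distrib_left distrib_right mult_single mult.commute)
qed
lemma star_scal: "star (scal c) = scal c"
  by (simp add: scal_def star_single)
lemma star_gelem: "star (gelem g) = gelem (- g)"
  by (simp add: gelem_def star_single)
lemma gelem_mult: "gelem a * gelem b = (gelem (a + b) :: ('g::group_add,'k::field) grpalg)"
  by (simp add: gelem_def mult_single)

lemma peval_ext:
  assumes "degree p \<le> N"
  shows "peval p x = (\<Sum>i\<le>N. scal (coeff p i) * x ^ i)"
proof -
  have "(\<Sum>i\<le>N. scal (coeff p i) * x ^ i) = (\<Sum>i\<le>degree p. scal (coeff p i) * x ^ i)
     + (\<Sum>i\<in>{degree p<..N}. scal (coeff p i) * x ^ i)"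
    using assms by (subst sum.union_disjoint[symmetric]) (auto intro!: sum.cong)
  also have "(\<Sum>i\<in>{degree p<..N}. scal (coeff p i) * x ^ i) = 0"
    by (intro sum.neutral) (auto simp: coeff_eq_0)
  finally show ?thesis by (simp add: peval_def)
qed

lemma peval_add: "peval (p + q) x = peval p x + peval q x"
proof -
  let ?N = "max (degree p) (degree q)"
  have "degree (p + q) \<le> ?N" by (rule degree_add_le) auto
  then show ?thesis
    by (simp add: peval_ext[of _ ?N] scal_add distrib_right sum.distrib)
qed
lemma peval_minus: "peval (- p) x = - peval p x"
  by (simp add: peval_def scal_minus sum_negf)
lemma peval_diff: "peval (p - q) x = peval p x - peval q x"
  using peval_add[of p "- q" x] by (simp add: peval_minus)
lemma peval_smult: "peval (smult c p) x = scal c * peval p x"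
proof -
  have "degree (smult c p) \<le> degree p" by simp
  then show ?thesis
    by (simp add: peval_ext[of _ "degree p"] sum_distrib_left scal_mult[symmetric] mult.assoc)
qed
lemma peval_0[simp]: "peval 0 x = 0" by (simp add: peval_def)
lemma peval_1[simp]: "peval 1 x = 1" by (simp add: peval_def)

lemma pow_comm: "a * x = x * a \<Longrightarrow> a * x ^ i = x ^ i * (a::'a::monoid_mult)"
  by (induct i) (simp_all, metis mult.assoc)

lemma peval_X: "peval (pCons 0 q) x = x * peval q (x :: ('g::group_add,'k::field) grpalg)"
proof -
  have "degree (pCons 0 q) \<le> Suc (degree q)" by (simp add: degree_pCons_le)
  then have "peval (pCons 0 q) x = (\<Sum>i\<le>Suc (degree q). scal (coeff (pCons 0 q) i) * x ^ i)"
    by (rule peval_ext)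
  also have "\<dots> = (\<Sum>i\<le>degree q. scal (coeff q i) * x ^ Suc i)"
    by (subst sum.atMost_Suc_shift) simp
  also have "\<dots> = (\<Sum>i\<le>degree q. x * (scal (coeff q i) * x ^ i))"
  proof (intro sum.cong refl)
    fix i
    have "scal (coeff q i) * x ^ Suc i = (scal (coeff q i) * x) * x ^ i" by (simp add: mult.assoc)
    also have "\<dots> = (x * scal (coeff q i)) * x ^ i" by (simp only: scal_comm)
    finally show "scal (coeff q i) * x ^ Suc i = x * (scal (coeff q i) * x ^ i)" by (simp add: mult.assoc)
  qed
  finally show ?thesis by (simp add: peval_def sum_distrib_left)
qed

lemma peval_comm: "a * x = x * a \<Longrightarrow> a * peval p x = peval p x * (a :: ('g::group_add,'k::field) grpalg)"
  unfolding peval_def sum_distrib_left sum_distrib_right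
proof (intro sum.cong refl)
  fix i assume "a * x = x * a"
  then have "a * x ^ i = x ^ i * a" by (rule pow_comm)
  then show "a * (scal (coeff p i) * x ^ i) = scal (coeff p i) * x ^ i * a"
  proof -
    have "a * (scal (coeff p i) * x ^ i) = scal (coeff p i) * (a * x ^ i)"
    proof -
      have "a * (scal (coeff p i) * x ^ i) = (a * scal (coeff p i)) * x ^ i" by (simp add: mult.assoc)
      also have "\<dots> = (scal (coeff p i) * a) * x ^ i" by (simp only: scal_comm)
      finally show ?thesis by (simp add: mult.assoc)
    qed
    also have "\<dots> = scal (coeff p i) * x ^ i * a" using \<open>a * x ^ i = x ^ i * a\<close> by (simp add: mult.assoc)
    finally show ?thesis .
  qed
qed

lemma star_sum: "star (sum f A) = (\<Sum>i\<in>A. star (f i))"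
  by (induct A rule: infinite_finite_induct) (simp_all add: star_add)

lemma star_pow: "star x = x \<Longrightarrow> star (x ^ i) = (x ^ i :: ('g::group_add,'k::field) grpalg)"
proof (induct i)
  case 0 show ?case using star_scal[of 1] by simp
next
  case (Suc i)
  have "star (x ^ Suc i) = star (x ^ i) * star x" by (simp add: star_mult)
  also have "\<dots> = x ^ i * x" using Suc by simp
  also have "\<dots> = x ^ Suc i" by (simp add: power_commutes)
  finally show ?case .
qed

lemma star_peval: "star x = x \<Longrightarrow> star (peval p x) = peval p (x :: ('g::group_add,'k::field) grpalg)"
  unfolding peval_def star_sum by (intro sum.cong refl) (simp add: star_mult star_pow star_scal scal_comm[symmetric])


definition pw :: "'g::group_add \<Rightarrow> nat \<Rightarrow> 'g" where "pw h m = ((+) h ^^ m) 0"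

lemma pw_0[simp]: "pw h 0 = 0" by (simp add: pw_def)
lemma pw_Suc: "pw h (Suc m) = h + pw h m" by (simp add: pw_def)
lemma pw_comm: "pw h m + h = h + pw h m"
  by (induct m) (simp_all add: pw_Suc add.assoc)

lemma gstep:
  fixes h c :: "'g::group_add"
  assumes "c + h = h + c"
  shows "-h + (h + c) = c" "h + - (h + c) = - c" "- h + - (h + c) = - (h + (h + c))"
proof -
  show "-h + (h + c) = c" by (simp add: add.assoc[symmetric])
  have m: "- c + - h = - h + - c" using arg_cong[OF assms, of uminus] by (simp add: minus_add)
  have "h + - (h + c) = h + (- c + - h)" by (simp only: minus_add)
  also have "\<dots> = h + (- h + - c)" by (simp only: m)
  also have "\<dots> = - c" by (simp only: add.assoc[symmetric] add.right_inverse add_0_left)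
  finally show "h + - (h + c) = - c" .
  have "- h + - (h + c) = - h + (- c + - h)" by (simp only: minus_add)
  also have "\<dots> = (- h + - c) + - h" by (simp only: add.assoc)
  also have "\<dots> = (- c + - h) + - h" by (simp only: m)
  also have "\<dots> = - (h + (h + c))" by (simp only: minus_add)
  finally show "- h + - (h + c) = - (h + (h + c))" .
qed

lemma twot: "scal 2 * bar (gelem h) = gelem h + (gelem (- h) :: ('g::group_add,'k::field_char_0) grpalg)"
  by (simp add: bar_def star_gelem mult.assoc[symmetric] scal_mult)

lemma cheb_nat:
  fixes h :: "'g::group_add"
  shows "gelem (pw h m) - gelem (- pw h m) =
    peval (Pnat m) (bar (gelem h)) * (gelem h - (gelem (- h) :: ('g,'k::field_char_0) grpalg))"
proof (induct m rule: Pnat.induct)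
  case 1 then show ?case by simp
next
  case 2 then show ?case by (simp add: pw_Suc)
next
  case (3 m)
  let ?t = "bar (gelem h) :: ('g,'k) grpalg"
  let ?d = "gelem h - (gelem (- h) :: ('g,'k) grpalg)"
  have "peval (Pnat (Suc (Suc m))) ?t * ?d
      = (scal 2 * ?t) * (peval (Pnat (Suc m)) ?t * ?d) - peval (Pnat m) ?t * ?d"
  proof -
    have c: "?t * scal 2 = scal 2 * ?t" by (rule scal_comm[symmetric])
    show ?thesis
      by (simp add: peval_diff peval_smult peval_X left_diff_distrib mult.assoc[symmetric] c)
  qed
  also have "\<dots> = (gelem h + gelem (- h)) * (gelem (pw h (Suc m)) - gelem (- pw h (Suc m)))
      - (gelem (pw h m) - gelem (- pw h m))"
    using 3 by (simp add: twot)
  also have "\<dots> = gelem (pw h (Suc (Suc m))) - gelem (- pw h (Suc (Suc m)))"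
  proof -
    note g = gstep[OF pw_comm[of h m]]
    have "(gelem h + gelem (- h)) * (gelem (pw h (Suc m)) - gelem (- pw h (Suc m)))
      = (gelem (h + (h + pw h m)) - gelem (h + - (h + pw h m)))
        + (gelem (- h + (h + pw h m)) - gelem (- h + - (h + pw h m)) :: ('g,'k) grpalg)"
      by (simp only: distrib_right right_diff_distrib gelem_mult pw_Suc add_diff_add)
    also have "\<dots> = (gelem (pw h (Suc (Suc m))) - gelem (- pw h m))
        + (gelem (pw h m) - gelem (- pw h (Suc (Suc m))))"
      by (simp only: g pw_Suc)
    finally show ?thesis by (simp add: algebra_simps)
  qed
  finally show ?case by simp
qed


lemma cheb_int:
  fixes h :: "'g::group_add"
  shows "gelem (gpow h n) - gelem (- gpow h n) =
    peval (Pint n) (bar (gelem h)) * (gelem h - (gelem (- h) :: ('g,'k::field_char_0) grpalg))"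
proof (cases "0 \<le> n")
  case True
  then show ?thesis using cheb_nat[of h "nat n"] by (simp add: gpow_def Pint_def pw_def)
next
  case False
  then have "gelem (gpow h n) - gelem (- gpow h n) = - (gelem (pw h (nat (-n))) - (gelem (- pw h (nat (-n))) :: ('g,'k) grpalg))"
    by (simp add: gpow_def pw_def)
  also have "\<dots> = - (peval (Pnat (nat (-n))) (bar (gelem h)) * (gelem h - gelem (- h)))"
    by (simp only: cheb_nat)
  finally show ?thesis using False by (simp add: Pint_def peval_minus)
qed

lemma bar_diff: "bar a - bar b = bar (a - b :: ('g::group_add,'k::field) grpalg)"
  by (simp add: bar_def star_diff algebra_simps)

lemma star_bar: "star (bar y) = bar (y :: ('g::group_add,'k::field) grpalg)"
  by (simp add: bar_def star_mult star_add star_scal scal_comm[symmetric] add.commute)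

lemma bar_Sharp: "bar y \<in> (Sharp :: ('g::group_add,'k::field) grpalg set)"
  unfolding Sharp_def Icomm_def twosided_ideal_def by (simp add: star_bar)

lemma comm_Icomm: "star b = b \<Longrightarrow> r * (a * b - b * a) \<in> (Icomm :: ('g::group_add,'k::field) grpalg set)"
  unfolding Icomm_def twosided_ideal_def by blast

lemma bar_key:
  assumes "star Q = Q"
  shows "bar (y * Q) = Q * bar y + scal (1/2) * (y * Q - Q * (y :: ('g::group_add,'k::field) grpalg))"
proof -
  have c: "Q * (scal (1/2) * z) = scal (1/2) * (Q * z)" for z
    by (simp add: mult.assoc[symmetric] scal_comm[of _ Q, symmetric])
  show ?thesis unfolding bar_def star_mult assms c
    by (simp add: algebra_simps)
qed

lemma d_comm: "(gelem h - gelem (- h)) * bar (gelem h) = bar (gelem h) * (gelem h - (gelem (- h) :: ('g::group_add,'k::field) grpalg))"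
proof -
  have "(gelem h - gelem (- h)) * (gelem h + gelem (- h)) = (gelem h + gelem (- h)) * (gelem h - (gelem (- h) :: ('g,'k) grpalg))"
    by (simp add: algebra_simps gelem_mult)
  then show ?thesis unfolding bar_def star_gelem
    by (metis mult.assoc scal_comm)
qed

theorem mainTheorem11:
  fixes h :: "'g::group_add" and n :: int
  shows "(dsharp {gpow h n} :: ('g, 'k::field_char_0) grpalg set)
           \<subseteq> sharp_ideal {peval (Pint n) (bar (gelem h))}"
  unfolding dsharp_def sharp_ideal_def
proof (rule Inter_anti_mono, rule subsetI)
  fix J :: "('g,'k) grpalg set"
  let ?t = "bar (gelem h) :: ('g,'k) grpalg"
  let ?Q = "peval (Pint n) ?t"
  let ?d = "gelem h - (gelem (- h) :: ('g,'k) grpalg)"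
  assume J: "J \<in> {J. Icomm \<subseteq> J \<and> J \<subseteq> Sharp \<and> {?Q} \<subseteq> J \<and> 0 \<in> J
      \<and> (\<forall>a\<in>J. \<forall>b\<in>J. a + b \<in> J) \<and> (\<forall>r\<in>Sharp. \<forall>a\<in>J. r * a \<in> J \<and> a * r \<in> J)}"
  have gen: "bar (x * gelem l) - bar (x * gelem (- l)) \<in> J" if l: "l \<in> {gpow h n}" for x l
  proof -
    have sQ: "star ?Q = ?Q" by (rule star_peval) (rule star_bar)
    have Qd: "?Q * ?d = ?d * ?Q" by (rule peval_comm[symmetric]) (rule d_comm)
    have "bar (x * gelem l) - bar (x * gelem (- l)) = bar (x * (gelem l - gelem (- l)))"
      by (simp add: bar_diff right_diff_distrib)
    also have "\<dots> = bar ((x * ?d) * ?Q)"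
    proof -
      from l have "l = gpow h n" by simp
      then show ?thesis by (simp only: cheb_int Qd mult.assoc)
    qed
    also have "\<dots> = ?Q * bar (x * ?d) + scal (1/2) * ((x * ?d) * ?Q - ?Q * (x * ?d))"
      by (rule bar_key[OF sQ])
    finally have e: "bar (x * gelem l) - bar (x * gelem (- l)) = \<dots>" .
    have "?Q * bar (x * ?d) \<in> J" using J bar_Sharp by blast
    moreover have "scal (1/2) * ((x * ?d) * ?Q - ?Q * (x * ?d)) \<in> J"
      using J comm_Icomm[OF sQ] by blast
    ultimately show ?thesis unfolding e using J by blast
  qed
  show "J \<in> {J. Icomm \<subseteq> J \<and> J \<subseteq> Sharp \<and> {bar (x * gelem l) - bar (x * gelem (- l)) |x l. l \<in> {gpow h n}} \<subseteq> J \<and> 0 \<in> J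
      \<and> (\<forall>a\<in>J. \<forall>b\<in>J. a + b \<in> J) \<and> (\<forall>r\<in>Sharp. \<forall>a\<in>J. r * a \<in> J \<and> a * r \<in> J)}"
    using J gen by blast
qed

end
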